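(* In the whitened Gaussian spiked model (context), condition on the event $\mathcal{E}$. Let $(i_0,j_0)=\arg\max_{i,j}|(\widehat{\boldsymbol{\Sigma}}_{xy})_{ij}|$. There is a constant $C>0$ such that for any $\gamma\in(0,1)$, if $$m\ge\frac{C(1+\rho)^2}{\rho^2(1-\sqrt{\gamma})^2}\,s_{\mathbf{u}}(1)s_{\mathbf{v}}(1)\log n,$$ then $|u_{i_0}|\,|v_{j_0}|\ge\sqrt{\gamma/(s_{\mathbf{u}}(1)s_{\mathbf{v}}(1))}$.
   Context: Model: $m$ i.i.d. samples $(\mathbf{x}_i,\mathbf{y}_i)$ from a zero-mean jointly Gaussian law on $\mathbb{R}^n\times\mathbb{R}^n$ with $\boldsymbol{\Sigma}_{xx}=\boldsymbol{\Sigma}_{yy}=\mathbf{I}_n$, $\boldsymbol{\Sigma}_{xy}=\rho\mathbf{u}\mathbf{v}^\top$, $\rho\in(0,1)$, $\|\mathbf{u}\|_2=\|\mathbf{v}\|_2=1$, $\|\mathbf{u}\|_0\le k_{\mathbf{u}}$, $\|\mathbf{v}\|_0\le k_{\mathbf{v}}$. $\widehat{\boldsymbol{\Sigma}}_{xy}=\frac1m\sum_i\mathbf{x}_i\mathbf{y}_i^\top$, $\mathbf{W}=\widehat{\boldsymbol{\Sigma}}_{xy}-\rho\mathbf{u}\mathbf{v}^\top$. Event $\mathcal{E}$: for all $S_1,S_2\subset[n]$ with $|S_1|\le k_{\mathbf{u}}$, $|S_2|\le k_{\mathbf{v}}$, $\|\mathbf{W}_{S_1,S_2}\|_2\le C'\sqrt{((|S_1|+|S_2|)\log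 n+c'\log n)/m}$ for fixed constants $C',c'>0$ (submatrix, spectral norm). Structure functions: $s_{\mathbf{u}}(p)=(\sum_{i=1}^pu_{(i)}^2)^{-1}$, $s_{\mathbf{v}}(q)=(\sum_{j=1}^qv_{(j)}^2)^{-1}$, where $u_{(i)}$ is the $i$-th largest entry of $\mathbf{u}$ in absolute value; thus $s_{\mathbf{u}}(1)=1/u_{(1)}^2$. *)

theory Defs
  imports Complex_Main
begin

text \<open>Vectors of R^n are functions nat => real (only indices < n matter);
 n x n matrices are functions nat => nat => real.\<close>

definition sample_cross_cov :: "nat \<Rightarrow> (nat \<Rightarrow> nat \<Rightarrow> real) \<Rightarrow> (nat \<Rightarrow> nat \<Rightarrow> real) \<Rightarrow> nat \<Rightarrow> nat \<Rightarrow> real" where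
  "sample_cross_cov m x y i j = (1 / real m) * (\<Sum>l<m. x l i * y l j)"

definition sub_spec_norm :: "(nat \<Rightarrow> nat \<Rightarrow> real) \<Rightarrow> nat set \<Rightarrow> nat set \<Rightarrow> real" where
  "sub_spec_norm A S1 S2 =
     Sup {sqrt (\<Sum>i\<in>S1. (\<Sum>j\<in>S2. A i j * b j)^2) | b. (\<Sum>j\<in>S2. (b j)^2) \<le> 1}"

definition l0_norm :: "nat \<Rightarrow> (nat \<Rightarrow> real) \<Rightarrow> nat" where
  "l0_norm n u = card {i. i < n \<and> u i \<noteq> 0}"

text \<open>u_(i): the i-th largest entry (1-based) of u in absolute value.\<close>
definition abs_order_stat :: "nat \<Rightarrow> (nat \<Rightarrow> real) \<Rightarrow> nat \<Rightarrow> real" where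
  "abs_order_stat n u i = rev (sort (map (\<lambda>k. \<bar>u k\<bar>) [0..<n])) ! (i - 1)"

definition struct_fun :: "nat \<Rightarrow> (nat \<Rightarrow> real) \<Rightarrow> nat \<Rightarrow> real" where
  "struct_fun n u p = inverse (\<Sum>i=1..p. (abs_order_stat n u i)^2)"

end

theory Submission
  imports Defs
begin

lemma sl: "sorted xs \<Longrightarrow> x \<in> set xs \<Longrightarrow> x \<le> last xs"
  by (metis in_set_conv_decomp_last last.simps last_appendR last_in_set
    list.discI nle_le sorted_append sorted_simps(2))

lemma os1:
  assumes "0 < n"
  shows "\<exists>k<n. abs_order_stat n u 1 = \<bar>u k\<bar>" "\<forall>k<n. \<bar>u k\<bar> \<le> abs_order_stat n u 1"
proof -
  let ?L = "sort (map (\<lambda>k. \<bar>u k\<bar>) [0..<n])"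
  have "length ?L = n" by simp
  then have ne: "?L \<noteq> []" using assms by (metis less_irrefl list.size(3))
  have eq: "abs_order_stat n u 1 = last ?L"
    unfolding abs_order_stat_def using ne by (simp add: hd_rev[symmetric] hd_conv_nth rev_is_Nil_conv)
  have "last ?L \<in> set ?L" using ne by (rule last_in_set)
  then show "\<exists>k<n. abs_order_stat n u 1 = \<bar>u k\<bar>" using eq by auto
  show "\<forall>k<n. \<bar>u k\<bar> \<le> abs_order_stat n u 1"
    using eq sl[of ?L] by auto
qed

lemma sf1:
  assumes "0 < n" "(\<Sum>i<n. (u i)^2) = 1"
  shows "\<exists>k<n. struct_fun n u 1 = inverse ((u k)^2) \<and> u k \<noteq> 0 \<and> (\<forall>j<n. \<bar>u j\<bar> \<le> \<bar>u k\<bar>)"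
proof -
  obtain k where k: "k < n" "abs_order_stat n u 1 = \<bar>u k\<bar>" using os1(1)[OF assms(1)] by blast
  have le: "\<forall>j<n. \<bar>u j\<bar> \<le> \<bar>u k\<bar>" using os1(2)[OF assms(1), of u] k by auto
  have "u k \<noteq> 0"
  proof
    assume "u k = 0"
    then have "\<forall>j<n. u j = 0" using le by auto
    then have "(\<Sum>i<n. (u i)^2) = 0" by simp
    then show False using assms(2) by simp
  qed
  moreover have "struct_fun n u 1 = inverse ((u k)^2)"
    unfolding struct_fun_def using k by simp
  ultimately show ?thesis using k le by blast
qed

lemma specsingle:
  "\<bar>A i j\<bar> \<le> sub_spec_norm A {i} {j}"
  unfolding sub_spec_norm_def
proof (rule cSup_upper)
  show "\<bar>A i j\<bar> \<in> {sqrt (\<Sum>i\<in>{i}. (\<Sum>j\<in>{j}. A i j * b j)^2) | b. (\<Sum>j\<in>{j}. (b j)^2) \<le> 1}"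
    by (rule CollectI, rule exI[of _ "\<lambda>_. 1"]) simp
  show "bdd_above {sqrt (\<Sum>i\<in>{i}. (\<Sum>j\<in>{j}. A i j * b j)^2) | b. (\<Sum>j\<in>{j}. (b j)^2) \<le> 1}"
  proof (rule bdd_aboveI[of _ "\<bar>A i j\<bar>"])
    fix z assume "z \<in> {sqrt (\<Sum>i\<in>{i}. (\<Sum>j\<in>{j}. A i j * b j)^2) | b. (\<Sum>j\<in>{j}. (b j)^2) \<le> 1}"
    then obtain b where b: "(b j)^2 \<le> 1" "z = \<bar>A i j\<bar> * \<bar>b j\<bar>" by (auto simp: abs_mult)
    have "\<bar>b j\<bar> \<le> 1" using b(1) by (simp add: abs_square_le_1)
    then show "z \<le> \<bar>A i j\<bar>" using b(2) by (simp add: mult_left_le)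
  qed
qed

theorem proposition2:
  fixes C' c' :: real
  assumes "C' > 0" and "c' > 0"
  shows "\<exists>C > 0. \<forall>(n::nat) (m::nat) (\<rho>::real) (u::nat \<Rightarrow> real) (v::nat \<Rightarrow> real) (ku::nat) (kv::nat)
      (x::nat \<Rightarrow> nat \<Rightarrow> real) (y::nat \<Rightarrow> nat \<Rightarrow> real) (\<gamma>::real) (i0::nat) (j0::nat).
    0 < \<rho> \<longrightarrow> \<rho> < 1 \<longrightarrow> m \<ge> 1 \<longrightarrow>
    (\<Sum>i<n. (u i)^2) = 1 \<longrightarrow> (\<Sum>j<n. (v j)^2) = 1 \<longrightarrow>
    l0_norm n u \<le> ku \<longrightarrow> l0_norm n v \<le> kv \<longrightarrow>
    (\<forall>S1 S2. S1 \<subseteq> {..<n} \<longrightarrow> S2 \<subseteq> {..<n} \<longrightarrow> card S1 \<le> ku \<longrightarrow> card S2 \<le> kv \<longrightarrow>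
       sub_spec_norm (\<lambda>i j. sample_cross_cov m x y i j - \<rho> * u i * v j) S1 S2
         \<le> C' * sqrt ((real (card S1 + card S2) * ln (real n) + c' * ln (real n)) / real m)) \<longrightarrow>
    i0 < n \<longrightarrow> j0 < n \<longrightarrow>
    (\<forall>i<n. \<forall>j<n. \<bar>sample_cross_cov m x y i j\<bar> \<le> \<bar>sample_cross_cov m x y i0 j0\<bar>) \<longrightarrow>
    0 < \<gamma> \<longrightarrow> \<gamma> < 1 \<longrightarrow>
    real m \<ge> C * (1 + \<rho>)^2 / (\<rho>^2 * (1 - sqrt \<gamma>)^2)
                * struct_fun n u 1 * struct_fun n v 1 * ln (real n) \<longrightarrow>
    \<bar>u i0\<bar> * \<bar>v j0\<bar> \<ge> sqrt (\<gamma> / (struct_fun n u 1 * struct_fun n v 1))"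
proof (rule exI[of _ "4 * C'^2 * (2 + c')"], intro conjI allI impI)
  show "0 < 4 * C'^2 * (2 + c')" using assms by simp
next
  fix n m :: nat and \<rho> :: real and u v :: "nat \<Rightarrow> real" and ku kv :: nat
    and x y :: "nat \<Rightarrow> nat \<Rightarrow> real" and \<gamma> :: real and i0 j0 :: nat
  let ?C = "4 * C'^2 * (2 + c')"
  let ?S = "sample_cross_cov m x y"
  assume r0: "0 < \<rho>" and r1: "\<rho> < 1" and m1: "1 \<le> m"
    and su: "(\<Sum>i<n. (u i)^2) = 1" and sv: "(\<Sum>j<n. (v j)^2) = 1"
    and lu: "l0_norm n u \<le> ku" and lv: "l0_norm n v \<le> kv"
    and ev: "\<forall>S1 S2. S1 \<subseteq> {..<n} \<longrightarrow> S2 \<subseteq> {..<n} \<longrightarrow> card S1 \<le> ku \<longrightarrow> card S2 \<le> kv \<longrightarrow>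
       sub_spec_norm (\<lambda>i j. sample_cross_cov m x y i j - \<rho> * u i * v j) S1 S2
         \<le> C' * sqrt ((real (card S1 + card S2) * ln (real n) + c' * ln (real n)) / real m)"
    and i0: "i0 < n" and j0: "j0 < n"
    and mx: "\<forall>i<n. \<forall>j<n. \<bar>?S i j\<bar> \<le> \<bar>?S i0 j0\<bar>"
    and g0: "0 < \<gamma>" and g1: "\<gamma> < 1"
    and mb: "real m \<ge> ?C * (1 + \<rho>)^2 / (\<rho>^2 * (1 - sqrt \<gamma>)^2)
                * struct_fun n u 1 * struct_fun n v 1 * ln (real n)"
  have n0: "0 < n" using i0 by simp
  obtain p where p: "p < n" "struct_fun n u 1 = inverse ((u p)^2)" "u p \<noteq> 0"
      "\<forall>j<n. \<bar>u j\<bar> \<le> \<bar>u p\<bar>" using sf1[OF n0 su] by blast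
  obtain q where q: "q < n" "struct_fun n v 1 = inverse ((v q)^2)" "v q \<noteq> 0"
      "\<forall>j<n. \<bar>v j\<bar> \<le> \<bar>v q\<bar>" using sf1[OF n0 sv] by blast
  have "{p} \<subseteq> {i. i < n \<and> u i \<noteq> 0}" using p by auto
  then have "card {p} \<le> l0_norm n u" unfolding l0_norm_def by (intro card_mono) auto
  then have ku1: "1 \<le> ku" using lu by simp
  have "{q} \<subseteq> {i. i < n \<and> v i \<noteq> 0}" using q by auto
  then have "card {q} \<le> l0_norm n v" unfolding l0_norm_def by (intro card_mono) auto
  then have kv1: "1 \<le> kv" using lv by simp
  define L where "L = ln (real n)"
  have L0: "0 \<le> L" unfolding L_def using n0 by simp
  define \<delta> where "\<delta> = C' * sqrt ((2 + c') * L / real m)"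
  have single: "\<bar>?S i j - \<rho> * u i * v j\<bar> \<le> \<delta>" if "i < n" "j < n" for i j
  proof -
    have "\<bar>?S i j - \<rho> * u i * v j\<bar> \<le> sub_spec_norm (\<lambda>i j. ?S i j - \<rho> * u i * v j) {i} {j}"
      by (rule specsingle)
    also have "\<dots> \<le> C' * sqrt ((real (card {i} + card {j}) * ln (real n) + c' * ln (real n)) / real m)"
      using spec[OF spec[OF ev, of "{i}"], of "{j}"] that ku1 kv1 by simp
    also have "\<dots> = \<delta>" unfolding \<delta>_def L_def by (simp add: algebra_simps)
    finally show ?thesis .
  qed
  have e1: "\<bar>?S i0 j0 - \<rho> * u i0 * v j0\<bar> \<le> \<delta>" using single i0 j0 by blast
  have e2: "\<bar>?S p q - \<rho> * u p * v q\<bar> \<le> \<delta>" using single p q by blast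
  have e3: "\<bar>?S p q\<bar> \<le> \<bar>?S i0 j0\<bar>" using mx p q by blast
  define A where "A = \<bar>u p\<bar> * \<bar>v q\<bar>"
  define g where "g = 1 - sqrt \<gamma>"
  have A0: "0 < A" unfolding A_def using p q by simp
  have g0': "0 < g" unfolding g_def using g0 g1 by simp
  have sfe: "struct_fun n u 1 * struct_fun n v 1 = inverse (A^2)"
    unfolding A_def using p q by (simp add: power_mult_distrib field_simps)
  have mpos: "0 < real m" using m1 by simp
  have d0: "0 \<le> \<delta>" unfolding \<delta>_def using assms L0 mpos by simp
  have "real m \<ge> ?C * (1 + \<rho>)^2 * L / (\<rho>^2 * g^2 * A^2)"
  proof -
    have "?C * (1 + \<rho>)^2 / (\<rho>^2 * (1 - sqrt \<gamma>)^2)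
                * struct_fun n u 1 * struct_fun n v 1 * ln (real n)
        = ?C * (1 + \<rho>)^2 / (\<rho>^2 * g^2) * (struct_fun n u 1 * struct_fun n v 1) * L"
      unfolding g_def L_def by (simp only: mult.assoc)
    also have "\<dots> = ?C * (1 + \<rho>)^2 * L / (\<rho>^2 * g^2 * A^2)"
      unfolding sfe by (simp add: field_simps)
    finally show ?thesis using mb by simp
  qed
  then have "real m * (\<rho>^2 * g^2 * A^2) \<ge> ?C * (1 + \<rho>)^2 * L"
    using A0 g0' r0 by (simp add: field_simps)
  moreover have "?C * (1 + \<rho>)^2 * L \<ge> ?C * L"
  proof -
    have "1 \<le> (1 + \<rho>)^2" using r0 by (simp add: one_le_power)
    moreover have "0 \<le> ?C * L" using assms L0 by simp
    ultimately have "?C * L * 1 \<le> ?C * L * (1 + \<rho>)^2" by (rule mult_left_mono)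
    then show ?thesis by (simp add: mult_ac)
  qed
  ultimately have key: "?C * L \<le> real m * (\<rho>^2 * g^2 * A^2)" by linarith
  have "(2 * \<delta>)^2 = ?C * L / real m"
    unfolding \<delta>_def using assms L0 mpos by (simp add: power_mult_distrib)
  also have "\<dots> \<le> (\<rho> * g * A)^2" using key mpos by (simp add: field_simps power_mult_distrib)
  finally have "2 * \<delta> \<le> \<rho> * g * A"
    using A0 g0' r0 d0 by (meson mult_nonneg_nonneg less_imp_le power2_le_imp_le)
  moreover have "\<rho> * A - \<delta> \<le> \<bar>?S p q\<bar>"
    using e2 unfolding A_def by (simp add: abs_mult)
  moreover have "\<bar>?S i0 j0\<bar> \<le> \<rho> * (\<bar>u i0\<bar> * \<bar>v j0\<bar>) + \<delta>"
  proof -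
    have "\<bar>\<rho> * u i0 * v j0\<bar> = \<rho> * (\<bar>u i0\<bar> * \<bar>v j0\<bar>)" using r0 by (simp add: abs_mult)
    moreover have "\<bar>?S i0 j0\<bar> \<le> \<bar>?S i0 j0 - \<rho> * u i0 * v j0\<bar> + \<bar>\<rho> * u i0 * v j0\<bar>"
      using abs_triangle_ineq[of "?S i0 j0 - \<rho> * u i0 * v j0" "\<rho> * u i0 * v j0"] by simp
    ultimately show ?thesis using e1 by linarith
  qed
  ultimately have "\<rho> * (sqrt \<gamma> * A) \<le> \<rho> * (\<bar>u i0\<bar> * \<bar>v j0\<bar>)"
    using e3 unfolding g_def by (simp add: algebra_simps)
  then have fin: "sqrt \<gamma> * A \<le> \<bar>u i0\<bar> * \<bar>v j0\<bar>" using r0 by simp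
  have "sqrt (\<gamma> / (struct_fun n u 1 * struct_fun n v 1)) = sqrt \<gamma> * A"
    unfolding sfe using A0 by (simp add: real_sqrt_mult divide_inverse)
  then show "sqrt (\<gamma> / (struct_fun n u 1 * struct_fun n v 1)) \<le> \<bar>u i0\<bar> * \<bar>v j0\<bar>"
    using fin by simp
qed

end
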